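(* Let $k\in\,]0,2]$, $M>0$, $\beta\in\,]0,\tfrac12[$, $0<\sigma_0\le\min\{1,\frac{3\beta^3}{4\pi M^2}\}$ and $I=\inf_{g\in\mathcal A}\mathcal D(g)$. Let $f\in\mathcal A$ and $\varepsilon,\eta,R>0$ be such that $\frac{2M}{R}\le1-\frac{1}{(1+\eta)^2}$, $f\le1$, $\mathcal D(f)\le I+\varepsilon$, and $$\Delta M:=\int_{|x|\ge R}\int_{\mathbb R^3}\sqrt{1+|v|^2}f\,dx\,dv\in\,]0,M[.$$ If $f_1=\mathbf 1_{\{|x|\le R\}}f$, then $$\frac{\Delta M}{M-\Delta M}\,|\mathcal D(f_1)|\le(1+\eta)\Delta M+\varepsilon.$$
   Context: Let $\chi(s)=\frac{k}{k+1}s^{1+1/k}$. A measurable $f\ge0$ on $\mathbb R^3\times\mathbb R^3$ is spherically symmetric if $f(Ax,Av)=f(x,v)$ for all $A\in SO(3)$. For such $f$: $\rho_f(x)=\int\sqrt{1+|v|^2}f(x,v)\,dv$ (radial, written $\rho_f(r)$), $m_f(r)=\int_{|x|\le r}\int\sqrt{1+|v|^2}f\,dx\,dv$, $\lambda_f$ given by $e^{-2\lambda_f(r)}=1-2m_f(r)/r$, and $\mathcal D(f)=\int\int e^{\lambda_f(|x|)}(\chi(f)-f)\,dx\,dv$. $\mathcal A$ is the set of measurable spherically symmetric $f\ge0$ with $\int\int\sqrt{1+|v|^2}f\,dx\,dv=M$ and $\rho_f(r)\le\sigma_0$ for all $r\ge0$. *)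

theory Defs
  imports "HOL-Analysis.Analysis"
begin

type_synonym phase = "(real^3) \<times> (real^3)"

text \<open>chi(s) = k/(k+1) s^(1+1/k)\<close>
definition chi :: "real \<Rightarrow> real \<Rightarrow> real" where
  "chi k s = k / (k + 1) * s powr (1 + 1 / k)"

definition spher_symm :: "(phase \<Rightarrow> real) \<Rightarrow> bool" where
  "spher_symm f \<longleftrightarrow>
     (\<forall>A :: real^3^3. orthogonal_matrix A \<and> det A = 1 \<longrightarrow>
        (\<forall>x v. f (A *v x, A *v v) = f (x, v)))"

text \<open>rho_f(x) = int sqrt(1+|v|^2) f(x,v) dv\<close>
definition rho :: "(phase \<Rightarrow> real) \<Rightarrow> real^3 \<Rightarrow> ennreal" where
  "rho f x = (\<integral>\<^sup>+ v. ennreal (sqrt (1 + (norm v)\<^sup>2) * f (x, v)) \<partial>lebesgue)"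

text \<open>total (energy) mass of f over the phase-space region S\<close>
definition mass_on :: "(phase \<Rightarrow> real) \<Rightarrow> phase set \<Rightarrow> ennreal" where
  "mass_on f S = (\<integral>\<^sup>+ z. indicator S z * ennreal (sqrt (1 + (norm (snd z))\<^sup>2) * f z) \<partial>lebesgue)"

text \<open>m_f(r)\<close>
definition m_f :: "(phase \<Rightarrow> real) \<Rightarrow> real \<Rightarrow> real" where
  "m_f f r = enn2real (mass_on f {z. norm (fst z) \<le> r})"

text \<open>lambda_f(r), defined by exp(-2 lambda_f(r)) = 1 - 2 m_f(r)/r\<close>
definition lam :: "(phase \<Rightarrow> real) \<Rightarrow> real \<Rightarrow> real" where
  "lam f r = - ln (1 - 2 * m_f f r / r) / 2"

text \<open>D(f) = int int e^lambda (chi(f) - f), as an extended real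
  (the first part may be +infinity, the second is finite on the class considered)\<close>
definition D :: "real \<Rightarrow> (phase \<Rightarrow> real) \<Rightarrow> ereal" where
  "D k f = enn2ereal (\<integral>\<^sup>+ z. ennreal (exp (lam f (norm (fst z))) * chi k (f z)) \<partial>lebesgue)
         - enn2ereal (\<integral>\<^sup>+ z. ennreal (exp (lam f (norm (fst z))) * f z) \<partial>lebesgue)"

definition admissible :: "real \<Rightarrow> real \<Rightarrow> (phase \<Rightarrow> real) set" where
  "admissible M \<sigma>0 = {f. f \<in> borel_measurable lebesgue \<and> spher_symm f \<and> (\<forall>z. 0 \<le> f z)
      \<and> mass_on f UNIV = ennreal M \<and> (\<forall>x. rho f x \<le> ennreal \<sigma>0)}"

end

theory Submission
  imports Defs
begin



lemma orth_norm:
  fixes A :: "real^3^3" assumes "orthogonal_matrix A" shows "norm (A *v x) = norm x"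
proof -
  have "(A *v x) \<bullet> (A *v x) = ((A *v x) v* A) \<bullet> x" by (simp add: dot_lmul_matrix)
  also have "(A *v x) v* A = transpose A *v (A *v x)" by simp
  also have "\<dots> = x" using assms by (simp add: matrix_vector_mul_assoc orthogonal_matrix)
  finally show ?thesis by (simp add: norm_eq)
qed

lemma sphere_null: "{z::phase. norm (fst z) = R} \<in> null_sets lebesgue"
proof -
  have "sphere (0::real^3) R \<in> null_sets lborel"
    using negligible_sphere[of "0::real^3" R]
    by (auto simp: null_sets_completion_iff negligible_iff_null_sets)
  have eq: "{z::phase. norm (fst z) = R} = sphere 0 R \<times> UNIV" by auto
  have "emeasure (lborel \<Otimes>\<^sub>M lborel) (sphere (0::real^3) R \<times> (UNIV::(real^3) set)) = 0"
    using \<open>sphere (0::real^3) R \<in> null_sets lborel\<close>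
    by (subst lborel.emeasure_pair_measure_Times) auto
  then have "sphere (0::real^3) R \<times> (UNIV::(real^3) set) \<in> null_sets lborel"
    unfolding lborel_prod by (auto simp: null_sets_def intro!: borel_closed closed_Times)
  then show ?thesis unfolding eq by (rule null_sets_completionI)
qed

definition sc :: "real \<Rightarrow> phase \<Rightarrow> phase" where "sc a z = (a *\<^sub>R fst z, snd z)"

lemma sc_sum: "sc a z = (\<Sum>j\<in>Basis. ((if snd j = 0 then a else 1) * (z \<bullet> j)) *\<^sub>R j)"
proof (rule euclidean_eqI)
  fix b :: phase assume b: "b \<in> Basis"
  define c where "c j = (if snd j = 0 then a else 1)" for j :: phase
  have "(\<Sum>j\<in>Basis. (c j * (z \<bullet> j)) *\<^sub>R j) \<bullet> b = (\<Sum>j\<in>Basis. c j * (z \<bullet> j) * (j \<bullet> b))"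
    by (simp add: inner_sum_left)
  also have "\<dots> = (\<Sum>j\<in>Basis. if j = b then c j * (z \<bullet> j) else 0)"
    by (rule sum.cong) (auto simp: inner_Basis b)
  also have "\<dots> = c b * (z \<bullet> b)" using b by simp
  finally have 1: "(\<Sum>j\<in>Basis. (c j * (z \<bullet> j)) *\<^sub>R j) \<bullet> b = c b * (z \<bullet> b)" .
  have "sc a z \<bullet> b = c b * (z \<bullet> b)"
    using b by (auto simp: sc_def Basis_prod_def inner_prod_def c_def)
  with 1 show "sc a z \<bullet> b = (\<Sum>j\<in>Basis. ((if snd j = 0 then a else 1) * (z \<bullet> j)) *\<^sub>R j) \<bullet> b"
    by (simp add: c_def)
qed

lemma sc_prod: fixes a :: real assumes "a > 0" shows "(\<Prod>j\<in>(Basis::phase set). \<bar>if snd j = 0 then a else 1\<bar>) = a^3"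
proof -
  define c where "c j = \<bar>if snd j = 0 then a else 1\<bar>" for j :: phase
  have i: "inj_on (\<lambda>u. (u, 0::real^3)) Basis" "inj_on (\<lambda>u. (0::real^3, u)) Basis"
    "(\<lambda>u. (u, 0::real^3)) ` Basis \<inter> (\<lambda>u. (0::real^3, u)) ` Basis = {}"
    by (auto intro!: inj_onI simp: nonzero_Basis)
  have "(\<Prod>j\<in>(Basis::phase set). c j) = (\<Prod>j\<in>(\<lambda>u. (u, 0::real^3)) ` Basis. c j) * (\<Prod>j\<in>(\<lambda>u. (0::real^3, u)) ` Basis. c j)"
    unfolding Basis_prod_def by (rule prod.union_disjoint) (use i in auto)
  also have "(\<Prod>j\<in>(\<lambda>u. (u, 0::real^3)) ` Basis. c j) = (\<Prod>u\<in>(Basis::(real^3) set). \<bar>a\<bar>)"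
    by (subst prod.reindex[OF i(1)]) (auto simp: c_def intro!: prod.cong)
  also have "(\<Prod>j\<in>(\<lambda>u. (0::real^3, u)) ` Basis. c j) = (\<Prod>u\<in>(Basis::(real^3) set). 1)"
    by (subst prod.reindex[OF i(2)]) (auto simp: c_def nonzero_Basis intro!: prod.cong)
  finally show ?thesis using assms by (simp add: c_def abs_of_pos)
qed


lemma sc_meas: assumes "a \<noteq> 0" shows "sc a \<in> lebesgue \<rightarrow>\<^sub>M lebesgue"
proof -
  have "(\<lambda>z. 0 + (\<Sum>j\<in>(Basis::phase set). ((if snd j = 0 then a else 1) * (z \<bullet> j)) *\<^sub>R j)) \<in> lebesgue \<rightarrow>\<^sub>M lebesgue"
    by (rule lebesgue_affine_measurable) (use assms in auto)
  then show ?thesis by (simp add: sc_sum[abs_def])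
qed

lemma nn_scale:
  assumes a: "a > 0" and F[measurable]: "F \<in> borel_measurable lebesgue"
  shows "(\<integral>\<^sup>+z. F z \<partial>lebesgue) = ennreal (a^3) * (\<integral>\<^sup>+z. F (sc a z) \<partial>lebesgue)"
proof -
  let ?T = "\<lambda>z. 0 + (\<Sum>j\<in>(Basis::phase set). ((if snd j = 0 then a else 1) * (z \<bullet> j)) *\<^sub>R j)"
  have T: "?T = sc a" by (simp add: sc_sum[abs_def])
  have L: "lebesgue = density (distr lebesgue lebesgue ?T) (\<lambda>_. (\<Prod>j\<in>(Basis::phase set). \<bar>if snd j = 0 then a else 1\<bar>))"
    by (rule lebesgue_affine_euclidean) (use a in auto)
  have M: "sc a \<in> lebesgue \<rightarrow>\<^sub>M lebesgue" using sc_meas a by simp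
  have "(\<integral>\<^sup>+z. F z \<partial>lebesgue) = (\<integral>\<^sup>+z. F z \<partial>density (distr lebesgue lebesgue (sc a)) (\<lambda>_. ennreal (a^3)))"
    using L unfolding T sc_prod[OF a] by simp
  also have "\<dots> = \<integral>\<^sup>+ z. ennreal (a^3) * F z \<partial>distr lebesgue lebesgue (sc a)"
    by (subst nn_integral_density) auto
  also have "\<dots> = ennreal (a^3) * integral\<^sup>N (distr lebesgue lebesgue (sc a)) F"
    using F measurable_distr_eq1 nn_integral_cmult by blast
  also have "\<dots> = ennreal (a^3) * (\<integral>\<^sup>+z. F (sc a z) \<partial>lebesgue)"
    using M by (subst nn_integral_distr) auto
  finally show ?thesis .
qed

lemma tonelli_leb:
  fixes F :: "phase \<Rightarrow> ennreal"
  assumes F: "F \<in> borel_measurable lebesgue"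
  shows "(\<integral>\<^sup>+z. F z \<partial>lebesgue) = (\<integral>\<^sup>+x. (\<integral>\<^sup>+v. F (x,v) \<partial>lebesgue) \<partial>lebesgue)"
proof -
  obtain G where G: "G \<in> borel_measurable lborel" "AE z in lborel. F z = G z"
    using completion_ex_borel_measurable[OF F] by blast
  have Gp: "G \<in> borel_measurable (lborel \<Otimes>\<^sub>M lborel)" using G(1) by (simp add: lborel_prod)
  have "AE z in lborel \<Otimes>\<^sub>M lborel. F z = G z" unfolding lborel_prod using G(2) .
  from lborel_pair.AE_pair[OF this]
  have ae: "AE x in lborel. AE v in lborel. F (x,v) = G (x,v)" by simp
  have "(\<integral>\<^sup>+z. F z \<partial>lebesgue) = (\<integral>\<^sup>+z. F z \<partial>lborel)" by (simp add: nn_integral_completion)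
  also have "\<dots> = (\<integral>\<^sup>+z. G z \<partial>lborel)" by (rule nn_integral_cong_AE) (use G(2) in auto)
  also have "\<dots> = (\<integral>\<^sup>+z. G z \<partial>(lborel \<Otimes>\<^sub>M lborel))" by (simp add: lborel_prod)
  also have "\<dots> = (\<integral>\<^sup>+x. \<integral>\<^sup>+v. G (x,v) \<partial>lborel \<partial>lborel)"
    by (rule lborel.nn_integral_fst[symmetric]) (rule Gp)
  also have "\<dots> = (\<integral>\<^sup>+x. \<integral>\<^sup>+v. F (x,v) \<partial>lborel \<partial>lborel)"
    apply (rule nn_integral_cong_AE)
    using ae by eventually_elim (rule nn_integral_cong_AE, auto)
  finally show ?thesis by (simp add: nn_integral_completion)
qed

lemma cont_meas: "continuous_on UNIV f \<Longrightarrow> f \<in> borel_measurable lebesgue"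
  by (rule measurable_completion) (simp add: borel_measurable_continuous_onI)

lemma w_meas[measurable]: "(\<lambda>z::phase. sqrt (1 + (norm (snd z))\<^sup>2)) \<in> borel_measurable lebesgue"
  by (rule cont_meas) (intro continuous_intros)

lemma nfst_meas[measurable]: "(\<lambda>z::phase. norm (fst z)) \<in> borel_measurable lebesgue"
  by (rule cont_meas) (intro continuous_intros)

lemma ball_set_meas[measurable]: "{z::phase. norm (fst z) \<le> r} \<in> sets lebesgue"
proof -
  have "closed {z::phase. norm (fst z) \<le> r}"
    by (intro closed_Collect_le continuous_intros)
  then show ?thesis by (auto intro: borel_closed)
qed

lemma ball_set_meas2[measurable]: "{z::phase. r \<le> norm (fst z)} \<in> sets lebesgue"
proof -
  have "closed {z::phase. r \<le> norm (fst z)}"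
    by (intro closed_Collect_le continuous_intros)
  then show ?thesis by (auto intro: borel_closed)
qed

lemma ball_set_meas3[measurable]: "{z::phase. r < norm (fst z)} \<in> sets lebesgue"
proof -
  have "open {z::phase. r < norm (fst z)}"
    by (intro open_Collect_less continuous_intros)
  then show ?thesis by (auto intro: borel_open)
qed

lemma mass_ball:
  fixes h :: "phase \<Rightarrow> real"
  assumes h[measurable]: "h \<in> borel_measurable lebesgue" and rho: "\<forall>x. rho h x \<le> ennreal \<sigma>"
    and s: "0 \<le> \<sigma>" and r: "0 \<le> r"
  shows "mass_on h {z. norm (fst z) \<le> r} \<le> ennreal (\<sigma> * (4/3*pi*r^3))"
proof -
  let ?S = "{z::phase. norm (fst z) \<le> r}"
  have "mass_on h ?S = (\<integral>\<^sup>+x. (\<integral>\<^sup>+v. indicator ?S (x,v) * ennreal (sqrt (1 + (norm (snd (x,v)))\<^sup>2) * h (x,v)) \<partial>lebesgue) \<partial>lebesgue)"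
    unfolding mass_on_def by (rule tonelli_leb) measurable
  also have "\<dots> = (\<integral>\<^sup>+x. indicator (cball 0 r) x * rho h x \<partial>lebesgue)"
    by (rule nn_integral_cong) (auto simp: rho_def indicator_def)
  also have "\<dots> \<le> (\<integral>\<^sup>+x. ennreal \<sigma> * indicator (cball (0::real^3) r) x \<partial>lebesgue)"
    by (rule nn_integral_mono) (auto simp: indicator_def rho)
  also have "\<dots> = ennreal \<sigma> * emeasure lebesgue (cball (0::real^3) r)"
    by (rule nn_integral_cmult_indicator) auto
  also have "emeasure lebesgue (cball (0::real^3) r) = ennreal (4/3*pi*r^3)"
    using emeasure_cball[OF r, of "0::real^3"] by (simp add: unit_ball_vol_3)
  also have "ennreal \<sigma> * ennreal (4/3*pi*r^3) = ennreal (\<sigma> * (4/3*pi*r^3))"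
    by (rule ennreal_mult[symmetric]) (use s r in auto)
  finally show ?thesis .
qed

lemma chi_props:
  assumes "0 < k" "0 \<le> s" "s \<le> 1"
  shows "0 \<le> chi k s" "chi k s \<le> s"
proof -
  show "0 \<le> chi k s" using assms unfolding chi_def by simp
  have "s powr (1 + 1/k) \<le> s powr 1"
    using assms by (intro powr_mono') auto
  then have "s powr (1 + 1/k) \<le> s" using assms by simp
  moreover have "k / (k+1) \<le> 1" using assms by simp
  ultimately show "chi k s \<le> s" unfolding chi_def using assms
    by (metis mult_left_le_one_le order_trans powr_ge_zero divide_nonneg_pos less_add_same_cancel1 add_pos_pos zero_less_one less_imp_le mult_le_cancel_left1 mult_left_mono)
qed

lemma chi_0[simp]: "chi k 0 = 0" by (simp add: chi_def)

lemma exp_nhl: assumes "0 < u" shows "exp (- ln u / 2) = 1 / sqrt u"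
proof -
  have "sqrt u = exp (ln (sqrt u))" using assms by simp
  also have "ln (sqrt u) = ln u / 2" using assms by (simp add: ln_sqrt)
  finally have "exp (ln u / 2) = sqrt u" by simp
  then show ?thesis by (simp add: exp_minus inverse_eq_divide)
qed

lemma Dform:
  fixes E h :: "phase \<Rightarrow> real"
  assumes E[measurable]: "E \<in> borel_measurable lebesgue" and E0: "\<forall>z. 0 \<le> E z"
    and h[measurable]: "h \<in> borel_measurable lebesgue" and h0: "\<forall>z. 0 \<le> h z" and h1: "\<forall>z. h z \<le> 1"
    and k: "0 < k"
    and fin: "(\<integral>\<^sup>+z. ennreal (E z * h z) \<partial>lebesgue) < \<infinity>"
  shows "\<exists>n\<ge>0. enn2ereal (\<integral>\<^sup>+z. ennreal (E z * chi k (h z)) \<partial>lebesgue)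
            - enn2ereal (\<integral>\<^sup>+z. ennreal (E z * h z) \<partial>lebesgue) = ereal (- n)
          \<and> (\<integral>\<^sup>+z. ennreal (E z * (h z - chi k (h z))) \<partial>lebesgue) = ennreal n"
proof -
  have [measurable]: "chi k \<in> borel_measurable borel" unfolding chi_def by measurable
  have pw: "E z * chi k (h z) \<le> E z * h z" for z
    using chi_props[OF k h0[rule_format, of z] h1[rule_format, of z]] mult_left_mono[OF _ E0[rule_format]] by blast
  have pw0: "0 \<le> E z * chi k (h z)" for z
    using chi_props[OF k h0[rule_format, of z] h1[rule_format, of z]] mult_nonneg_nonneg[OF E0[rule_format]] by blast
  define P where "P = (\<integral>\<^sup>+z. ennreal (E z * chi k (h z)) \<partial>lebesgue)"
  define Q where "Q = (\<integral>\<^sup>+z. ennreal (E z * h z) \<partial>lebesgue)"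
  have PQ: "P \<le> Q" unfolding P_def Q_def by (rule nn_integral_mono) (use pw in \<open>auto intro: ennreal_leI\<close>)
  obtain q where q: "Q = ennreal q" "0 \<le> q" using fin unfolding Q_def[symmetric]
    by (cases Q) auto
  obtain p where p: "P = ennreal p" "0 \<le> p" using PQ fin unfolding Q_def[symmetric]
    by (cases P) auto
  have pq: "p \<le> q" using PQ p q by simp
  have "(\<integral>\<^sup>+z. ennreal (E z * (h z - chi k (h z))) \<partial>lebesgue)
        = (\<integral>\<^sup>+z. ennreal (E z * h z) - ennreal (E z * chi k (h z)) \<partial>lebesgue)"
    by (rule nn_integral_cong) (simp add: ennreal_minus pw0 right_diff_distrib)
  also have "\<dots> = Q - P" unfolding P_def Q_def
  proof (rule nn_integral_diff)
    show "AE z in lebesgue. ennreal (E z * chi k (h z)) \<le> ennreal (E z * h z)"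
      using pw by (intro AE_I2 ennreal_leI) auto
  qed (use PQ fin in \<open>auto simp: P_def Q_def\<close>)
  also have "\<dots> = ennreal (q - p)" using p q by (simp add: ennreal_minus)
  finally show ?thesis using p q pq unfolding P_def[symmetric] Q_def[symmetric]
    by (intro exI[of _ "q - p"]) auto
qed

definition good :: "real \<Rightarrow> real \<Rightarrow> (phase \<Rightarrow> real) \<Rightarrow> bool" where
  "good M \<sigma> h \<longleftrightarrow> h \<in> borel_measurable lebesgue \<and> (\<forall>z. 0 \<le> h z) \<and> (\<forall>z. h z \<le> 1)
     \<and> mass_on h UNIV \<le> ennreal M \<and> (\<forall>x. rho h x \<le> ennreal \<sigma>)"

lemma mass_mono_set:
  assumes "S \<subseteq> T" shows "mass_on h S \<le> mass_on h T"
  unfolding mass_on_def using assms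
  by (intro nn_integral_mono) (auto simp: indicator_def)

lemma m_f_bounds:
  assumes g: "good M \<sigma> h" and M: "0 \<le> M" and s: "0 \<le> \<sigma>" and r: "0 \<le> r"
  shows "0 \<le> m_f h r" "m_f h r \<le> M" "m_f h r \<le> \<sigma> * (4/3*pi*r^3)"
    "mass_on h {z. norm (fst z) \<le> r} = ennreal (m_f h r)"
proof -
  have hm: "h \<in> borel_measurable lebesgue" and rho: "\<forall>x. rho h x \<le> ennreal \<sigma>"
    and mU: "mass_on h UNIV \<le> ennreal M" using g by (auto simp: good_def)
  have A: "mass_on h {z. norm (fst z) \<le> r} \<le> ennreal M"
    using mass_mono_set[of "{z. norm (fst z) \<le> r}" UNIV h] mU by simp
  show "0 \<le> m_f h r" by (simp add: m_f_def)
  show "m_f h r \<le> M" unfolding m_f_def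
    using enn2real_mono[OF A] M by simp
  have B: "mass_on h {z. norm (fst z) \<le> r} \<le> ennreal (\<sigma> * (4/3*pi*r^3))"
    by (rule mass_ball[OF hm rho s r])
  show "m_f h r \<le> \<sigma> * (4/3*pi*r^3)" unfolding m_f_def
    using enn2real_mono[OF B] s r by simp
  show "mass_on h {z. norm (fst z) \<le> r} = ennreal (m_f h r)"
    unfolding m_f_def using A by (cases "mass_on h {z. norm (fst z) \<le> r}") (auto simp: top_unique)
qed

lemma ratio_bound:
  fixes \<beta> M \<sigma> m r :: real
  assumes "0 < \<beta>" "0 < M" "0 < \<sigma>" "\<sigma> \<le> 3 * \<beta>^3 / (4 * pi * M\<^sup>2)"
    "0 \<le> m" "m \<le> M" "m \<le> \<sigma> * (4/3*pi*r^3)" "0 < r"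
  shows "2 * m / r \<le> 2 * \<beta>"
proof (cases "M / \<beta> \<le> r")
  case True
  have "2 * m / r \<le> 2 * M / r" using assms by (simp add: divide_right_mono)
  also have "\<dots> \<le> 2 * M / (M / \<beta>)" using assms True
    by (intro divide_left_mono) auto
  also have "\<dots> = 2 * \<beta>" using assms by simp
  finally show ?thesis .
next
  case False
  then have rb: "r * \<beta> < M" using assms by (simp add: field_simps)
  have "\<sigma> * (4/3*pi) \<le> \<beta>^3 / M^2"
    using assms(4) mult_right_mono[OF assms(4), of "4/3*pi"] by (simp add: field_simps)
  then have "m \<le> \<beta>^3 / M^2 * r^3"
    using assms(7) mult_right_mono[of "\<sigma> * (4/3*pi)" "\<beta>^3 / M^2" "r^3"] assms(8)
    by (simp add: algebra_simps)
  then have "m / r \<le> \<beta>^3 / M^2 * r^2" using assms(8)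
    by (simp add: field_simps power3_eq_cube power2_eq_square)
  also have "\<beta>^3 / M^2 * r^2 = \<beta> * ((r * \<beta>)^2 / M^2)" by (simp add: field_simps power2_eq_square power3_eq_cube)
  also have "(r * \<beta>)^2 / M^2 \<le> 1"
  proof -
    have "(r * \<beta>)^2 \<le> M^2" by (rule power_mono) (use rb assms in auto)
    then show ?thesis using assms by simp
  qed
  finally have "m / r \<le> \<beta>" using assms(1) by (simp add: mult_left_le)
  then show ?thesis by simp
qed


lemma exp_lam:
  assumes "0 \<le> y" "y < 1" shows "exp (- ln (1 - y) / 2) = 1 / sqrt (1 - y)"
  using exp_nhl[of "1 - y"] assms by simp

lemma lam_props:
  assumes g: "good M \<sigma> h" and b: "0 < \<beta>" "\<beta> < 1/2" and M: "0 < M" and s: "0 < \<sigma>"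
    "\<sigma> \<le> 3 * \<beta>^3 / (4 * pi * M\<^sup>2)" and r: "0 \<le> r"
  shows "0 \<le> 2 * m_f h r / r" "2 * m_f h r / r \<le> 2 * \<beta>"
    "exp (lam h r) = 1 / sqrt (1 - 2 * m_f h r / r)"
    "exp (lam h r) \<le> 1 / sqrt (1 - 2 * \<beta>)"
proof -
  note mb = m_f_bounds[OF g _ _ r] M s
  show y0: "0 \<le> 2 * m_f h r / r" using mb r by simp
  show y1: "2 * m_f h r / r \<le> 2 * \<beta>"
  proof (cases "r = 0")
    case True then show ?thesis using b by simp
  next
    case False
    then show ?thesis using ratio_bound[OF b(1) M s(1) s(2), of "m_f h r" r] mb r by auto
  qed
  show e: "exp (lam h r) = 1 / sqrt (1 - 2 * m_f h r / r)"
    unfolding lam_def using exp_lam[OF y0] y1 b by simp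
  have "sqrt (1 - 2 * \<beta>) \<le> sqrt (1 - 2 * m_f h r / r)" using y1 by simp
  moreover have "0 < sqrt (1 - 2 * \<beta>)" using b by simp
  ultimately show "exp (lam h r) \<le> 1 / sqrt (1 - 2 * \<beta>)" unfolding e
    by (intro divide_left_mono) auto
qed

lemma m_f_mono:
  assumes "mass_on h UNIV \<le> ennreal M" shows "mono (m_f h)"
proof
  fix r r' :: real assume "r \<le> r'"
  have "mass_on h {z. norm (fst z) \<le> r} \<le> mass_on h {z. norm (fst z) \<le> r'}"
    using \<open>r \<le> r'\<close> by (intro mass_mono_set) auto
  moreover have "mass_on h {z. norm (fst z) \<le> r'} < top"
  proof -
    have "mass_on h {z. norm (fst z) \<le> r'} \<le> mass_on h UNIV" by (rule mass_mono_set) simp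
    also have "\<dots> \<le> ennreal M" by (rule assms)
    also have "\<dots> < top" by simp
    finally show ?thesis .
  qed
  ultimately show "m_f h r \<le> m_f h r'" unfolding m_f_def by (rule enn2real_mono)
qed

lemma E_meas[measurable]:
  assumes "mass_on h UNIV \<le> ennreal M"
  shows "(\<lambda>z::phase. exp (lam h (norm (fst z)))) \<in> borel_measurable lebesgue"
proof -
  have [measurable]: "m_f h \<in> borel_measurable borel"
    by (rule borel_measurable_mono) (rule m_f_mono[OF assms])
  have [measurable]: "lam h \<in> borel_measurable borel"
    unfolding lam_def[abs_def] by measurable
  show ?thesis by measurable
qed

lemma D_good:
  assumes g: "good M \<sigma> h" and b: "0 < \<beta>" "\<beta> < 1/2" and M: "0 < M" and s: "0 < \<sigma>"
    "\<sigma> \<le> 3 * \<beta>^3 / (4 * pi * M\<^sup>2)" and k: "0 < k"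
  shows "\<exists>n\<ge>0. D k h = ereal (- n) \<and>
    (\<integral>\<^sup>+z. ennreal (exp (lam h (norm (fst z))) * (h z - chi k (h z))) \<partial>lebesgue) = ennreal n"
proof -
  have hm[measurable]: "h \<in> borel_measurable lebesgue" and h0: "\<forall>z. 0 \<le> h z" and h1: "\<forall>z. h z \<le> 1"
    and mU: "mass_on h UNIV \<le> ennreal M" using g by (auto simp: good_def)
  note Em[measurable] = E_meas[OF mU]
  define B where "B = 1 / sqrt (1 - 2 * \<beta>)"
  have B0: "0 \<le> B" using b by (simp add: B_def)
  have Eb: "exp (lam h (norm (fst z))) \<le> B" for z :: phase
    unfolding B_def by (rule lam_props(4)[OF g b M s]) simp
  have w1: "1 \<le> sqrt (1 + (norm (snd z))\<^sup>2)" for z :: phase by simp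
  have "(\<integral>\<^sup>+z. ennreal (exp (lam h (norm (fst z))) * h z) \<partial>lebesgue)
      \<le> (\<integral>\<^sup>+z. ennreal B * ennreal (sqrt (1 + (norm (snd z))\<^sup>2) * h z) \<partial>lebesgue)"
  proof (rule nn_integral_mono)
    fix z :: phase
    have "exp (lam h (norm (fst z))) * h z \<le> B * (sqrt (1 + (norm (snd z))\<^sup>2) * h z)"
    proof (rule mult_mono)
      show "h z \<le> sqrt (1 + (norm (snd z))\<^sup>2) * h z"
        using mult_right_mono[OF w1[of z] h0[rule_format, of z]] by simp
    qed (use Eb[of z] h0[rule_format, of z] B0 in auto)
    moreover have "ennreal B * ennreal (sqrt (1 + (norm (snd z))\<^sup>2) * h z) = ennreal (B * (sqrt (1 + (norm (snd z))\<^sup>2) * h z))"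
      by (rule ennreal_mult[symmetric]) (use B0 h0[rule_format, of z] in auto)
    ultimately show "ennreal (exp (lam h (norm (fst z))) * h z) \<le> ennreal B * ennreal (sqrt (1 + (norm (snd z))\<^sup>2) * h z)"
      by (simp add: ennreal_leI)
  qed
  also have "\<dots> = ennreal B * mass_on h UNIV"
    unfolding mass_on_def by (subst nn_integral_cmult) auto
  also have "\<dots> \<le> ennreal B * ennreal M" using mU by (rule mult_left_mono) simp
  also have "\<dots> < \<infinity>" by (simp add: ennreal_mult_less_top)
  finally have fin: "(\<integral>\<^sup>+z. ennreal (exp (lam h (norm (fst z))) * h z) \<partial>lebesgue) < \<infinity>" .
  show ?thesis
    using Dform[OF Em _ hm h0 h1 k fin] unfolding D_def by simp
qed




theorem lemma5p2:
  fixes k M \<beta> \<sigma>0 \<epsilon> \<eta> R :: real and f :: "phase \<Rightarrow> real"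
  assumes "0 < k" "k \<le> 2" "0 < M" "0 < \<beta>" "\<beta> < 1/2"
    and "0 < \<sigma>0" "\<sigma>0 \<le> min 1 (3 * \<beta>^3 / (4 * pi * M\<^sup>2))"
    and "f \<in> admissible M \<sigma>0"
    and "0 < \<epsilon>" "0 < \<eta>" "0 < R"
    and "2 * M / R \<le> 1 - 1 / (1 + \<eta>)\<^sup>2"
    and "\<forall>z. f z \<le> 1"
    and "D k f \<le> (INF g\<in>admissible M \<sigma>0. D k g) + ereal \<epsilon>"
    and "0 < enn2real (mass_on f {z. norm (fst z) \<ge> R})"
    and "enn2real (mass_on f {z. norm (fst z) \<ge> R}) < M"
  shows "let \<Delta>M = enn2real (mass_on f {z. norm (fst z) \<ge> R});
             f1 = (\<lambda>z. indicator {z. norm (fst z) \<le> R} z * f z)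
         in ereal (\<Delta>M / (M - \<Delta>M)) * \<bar>D k f1\<bar> \<le> ereal ((1 + \<eta>) * \<Delta>M + \<epsilon>)"
proof -
  note k = assms(1) and M = assms(3) and b = assms(4,5) and s0 = assms(6)
  have s1: "\<sigma>0 \<le> 3 * \<beta>^3 / (4 * pi * M\<^sup>2)" using assms(7) by simp
  note s = s0 s1
  have fm[measurable]: "f \<in> borel_measurable lebesgue" and fss: "spher_symm f"
    and f0: "\<forall>z. 0 \<le> f z" and fM: "mass_on f UNIV = ennreal M" and frho: "\<forall>x. rho f x \<le> ennreal \<sigma>0"
    using assms(8) by (auto simp: admissible_def)
  have f1le: "\<forall>z. f z \<le> 1" by (rule assms(13))
  have [measurable]: "chi k \<in> borel_measurable borel" unfolding chi_def by measurable
  define DM where "DM = enn2real (mass_on f {z. R \<le> norm (fst z)})"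
  define f1 where "f1 = (\<lambda>z. indicator {z. norm (fst z) \<le> R} z * f z)"
  have DM0: "0 < DM" and DMM: "DM < M" using assms(15,16) by (auto simp: DM_def)
  define m1 where "m1 = M - DM"
  have m10: "0 < m1" using DMM by (simp add: m1_def)

  (* masses *)
  have mge: "mass_on f {z. R \<le> norm (fst z)} = ennreal DM"
  proof -
    have "mass_on f {z. R \<le> norm (fst z)} \<le> ennreal M"
      using mass_mono_set[of "{z. R \<le> norm (fst z)}" UNIV f] fM by simp
    then show ?thesis unfolding DM_def
      by (cases "mass_on f {z. R \<le> norm (fst z)}") (auto simp: top_unique)
  qed
  have mgt: "mass_on f {z. R < norm (fst z)} = mass_on f {z. R \<le> norm (fst z)}"
  proof -
    have "AE z in lebesgue. z \<notin> {z::phase. norm (fst z) = R}"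
      by (rule AE_not_in) (rule sphere_null)
    then show ?thesis unfolding mass_on_def
      by (intro nn_integral_cong_AE) (auto elim!: eventually_mono simp: indicator_def)
  qed
  have split: "mass_on f {z. norm (fst z) \<le> R} + mass_on f {z. R < norm (fst z)} = mass_on f UNIV"
    unfolding mass_on_def
    by (subst nn_integral_add[symmetric]) (auto intro!: nn_integral_cong simp: indicator_def)
  have mle: "mass_on f {z. norm (fst z) \<le> R} = ennreal m1"
  proof -
    have A: "mass_on f {z. norm (fst z) \<le> R} + ennreal DM = ennreal M"
      using split mgt mge fM by simp
    then have "mass_on f {z. norm (fst z) \<le> R} \<noteq> top"
    proof (intro notI)
      assume "mass_on f {z. norm (fst z) \<le> R} = top"
      with A have "ennreal M = top" by simp
      then show False by simp
    qed
    then obtain m where m: "mass_on f {z. norm (fst z) \<le> R} = ennreal m" "0 \<le> m"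
      by (cases "mass_on f {z. norm (fst z) \<le> R}") auto
    with A DM0 have "ennreal (m + DM) = ennreal M" by (simp add: ennreal_plus)
    then have "m + DM = M" using m DM0 M by (subst (asm) ennreal_inj) auto
    then show ?thesis using m by (simp add: m1_def)
  qed
  (* f and f1 are good *)
  have gf: "good M \<sigma>0 f" using fm f0 f1le fM frho by (simp add: good_def)
  have f1m[measurable]: "f1 \<in> borel_measurable lebesgue" unfolding f1_def by measurable
  have f10: "\<forall>z. 0 \<le> f1 z" and f11: "\<forall>z. f1 z \<le> 1" and f1f: "\<forall>z. f1 z \<le> f z"
    using f0 f1le by (auto simp: f1_def indicator_def)
  have f1M: "mass_on f1 UNIV = ennreal m1"
    unfolding mle[symmetric] mass_on_def f1_def
    by (intro nn_integral_cong) (auto simp: indicator_def)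
  have rho_mono: "rho h1 x \<le> rho h2 x" if "\<forall>z. 0 \<le> h1 z" "\<forall>z. h1 z \<le> h2 z" for h1 h2 :: "phase \<Rightarrow> real" and x
    unfolding rho_def
  proof (intro nn_integral_mono ennreal_leI mult_left_mono)
    fix v show "h1 (x, v) \<le> h2 (x, v)" using that by auto
  qed simp
  have f1rho: "\<forall>x. rho f1 x \<le> ennreal \<sigma>0"
    using rho_mono[OF f10 f1f] frho order_trans by blast
  have gf1: "good M \<sigma>0 f1" using f1m f10 f11 f1M f1rho m10 DM0 by (simp add: good_def m1_def)

  (* the scaling factor *)
  define a where "a = (M / m1) powr (1/3)"
  have a0: "0 < a" using M m10 by (simp add: a_def)
  have a3: "a^3 = M / m1"
  proof -
    have "a^3 = a powr (real 3)" using a0 by (simp add: powr_realpow)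
    also have "\<dots> = M / m1" using M m10 by (simp add: a_def powr_powr)
    finally show ?thesis .
  qed
  have a1: "1 \<le> a" unfolding a_def
    by (rule ge_one_powr_ge_zero) (use M m10 DM0 in \<open>auto simp: m1_def\<close>)
  (* the rescaled function *)
  define g where "g = (\<lambda>z. f1 (sc (1/a) z))"
  have g_sc: "g (sc a z) = f1 z" for z
    using a0 by (simp add: g_def sc_def)
  have g_eval: "g (x, v) = f1 ((1/a) *\<^sub>R x, v)" for x v by (simp add: g_def sc_def)
  have gm[measurable]: "g \<in> borel_measurable lebesgue" unfolding g_def
    by (rule measurable_compose[OF sc_meas f1m]) (use a0 in simp)
  have g0: "\<forall>z. 0 \<le> g z" and g1: "\<forall>z. g z \<le> 1" using f10 f11 by (auto simp: g_def simp del: split_paired_All)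
  have sc_norm: "norm (fst (sc a z)) = a * norm (fst z)" for z using a0 by (simp add: sc_def)
  have sc_snd: "snd (sc a z) = snd z" for z by (simp add: sc_def)
  have mass_sc: "mass_on g {z. norm (fst z) \<le> a * r} = ennreal (a^3) * mass_on f1 {z. norm (fst z) \<le> r}" for r
    unfolding mass_on_def
    by (subst nn_scale[OF a0]) (auto simp: sc_norm sc_snd g_sc indicator_def a0 intro!: arg_cong2[where f="(*)"] nn_integral_cong)
  have massU: "mass_on g UNIV = ennreal (a^3) * mass_on f1 UNIV"
    unfolding mass_on_def
    by (subst nn_scale[OF a0]) (auto simp: sc_snd g_sc)
  have gM: "mass_on g UNIV = ennreal M"
  proof -
    have "ennreal (a^3) * ennreal m1 = ennreal (a^3 * m1)"
      by (rule ennreal_mult[symmetric]) (use a0 m10 in auto)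
    also have "a^3 * m1 = M" using a3 m10 by simp
    finally show ?thesis unfolding massU f1M .
  qed
  have grho: "\<forall>x. rho g x \<le> ennreal \<sigma>0"
  proof
    fix x :: "real^3"
    have "rho g x \<le> rho f ((1/a) *\<^sub>R x)"
      unfolding rho_def g_eval
      by (intro nn_integral_mono ennreal_leI mult_left_mono) (use f1f in auto)
    also have "\<dots> \<le> ennreal \<sigma>0" using frho by simp
    finally show "rho g x \<le> ennreal \<sigma>0" .
  qed
  have gss: "spher_symm g"
    unfolding spher_symm_def
  proof (intro allI impI)
    fix A :: "real^3^3" and x v assume A: "orthogonal_matrix A \<and> det A = 1"
    have "g (A *v x, A *v v) = indicator {z. norm (fst z) \<le> R} (A *v ((1/a) *\<^sub>R x), v) * f (A *v ((1/a) *\<^sub>R x), A *v v)"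
      by (simp add: g_eval f1_def matrix_vector_mult_scaleR indicator_def orth_norm[OF conjunct1[OF A]])
    also have "\<dots> = g (x, v)"
      using fss A unfolding spher_symm_def
      by (simp add: g_eval f1_def indicator_def orth_norm[OF conjunct1[OF A]])
    finally show "g (A *v x, A *v v) = g (x, v)" .
  qed
  have gadm: "g \<in> admissible M \<sigma>0" using gm gss g0 gM grho by (simp add: admissible_def)
  have gg: "good M \<sigma>0 g" using gm g0 g1 gM grho by (simp add: good_def)
  (* relations between the mass functions *)
  have mfg: "m_f g (a * r) = a^3 * m_f f1 r" for r
    unfolding m_f_def mass_sc using a0 by (simp add: enn2real_mult)
  have mff1: "m_f f r = m_f f1 r" if "r \<le> R" for r
    unfolding m_f_def mass_on_def f1_def using that
    by (intro arg_cong[where f=enn2real] nn_integral_cong) (auto simp: indicator_def)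
  have lamff1: "lam f r = lam f1 r" if "r \<le> R" for r
    unfolding lam_def using mff1[OF that] by simp
  have Eg: "exp (lam f1 r) \<le> exp (lam g (a * r))" if r: "0 \<le> r" for r
  proof -
    define y where "y = 2 * m_f f1 r / r"
    have y0: "0 \<le> y" using lam_props(1)[OF gf1 b M s r] by (simp add: y_def)
    have e1: "exp (lam f1 r) = 1 / sqrt (1 - y)" using lam_props(3)[OF gf1 b M s r] by (simp add: y_def)
    have ar: "0 \<le> a * r" using a0 r by simp
    have yy: "2 * m_f g (a * r) / (a * r) = a^2 * y"
      unfolding mfg y_def using a0 by (simp add: field_simps power2_eq_square power3_eq_cube)
    have e2: "exp (lam g (a * r)) = 1 / sqrt (1 - a^2 * y)"
      using lam_props(3)[OF gg b M s ar] yy by simp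
    have y2: "a^2 * y \<le> 2 * \<beta>" using lam_props(2)[OF gg b M s ar] yy by simp
    have "y \<le> a^2 * y" using a1 y0 by (simp add: mult_le_cancel_right1 one_le_power)
    then have "sqrt (1 - a^2 * y) \<le> sqrt (1 - y)" by simp
    moreover have "0 < sqrt (1 - a^2 * y)" using y2 b by simp
    ultimately show ?thesis unfolding e1 e2 by (intro divide_left_mono) auto
  qed
  have Ef: "exp (lam f r) \<le> 1 + \<eta>" if r: "R \<le> r" for r
  proof -
    have r0: "0 \<le> r" using r assms(11) by simp
    define y where "y = 2 * m_f f r / r"
    have e1: "exp (lam f r) = 1 / sqrt (1 - y)" using lam_props(3)[OF gf b M s r0] by (simp add: y_def)
    have "m_f f r \<le> M" using m_f_bounds(2)[OF gf _ _ r0] M s by simp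
    then have "y \<le> 2 * M / r" unfolding y_def using r0 by (simp add: divide_right_mono)
    also have "\<dots> \<le> 2 * M / R" using r M assms(11) by (intro divide_left_mono) auto
    also have "\<dots> \<le> 1 - 1 / (1 + \<eta>)\<^sup>2" by (rule assms(12))
    finally have "1 / (1 + \<eta>)\<^sup>2 \<le> 1 - y" by simp
    then have "sqrt (1 / (1 + \<eta>)\<^sup>2) \<le> sqrt (1 - y)" by (rule real_sqrt_le_mono)
    then have q: "1 / (1 + \<eta>) \<le> sqrt (1 - y)" using assms(10) by (simp add: real_sqrt_divide)
    have q0: "0 < 1 / (1 + \<eta>)" using assms(10) by simp
    have "1 / sqrt (1 - y) \<le> 1 / (1 / (1 + \<eta>))"
    proof (rule divide_left_mono[OF q])
      have "0 < sqrt (1 - y)" using q q0 by linarith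
      then show "0 < sqrt (1 - y) * (1 / (1 + \<eta>))" using q0 by simp
    qed simp
    then show ?thesis unfolding e1 using assms(10) by simp
  qed
  (* the functional values *)
  obtain nf where nf: "0 \<le> nf" "D k f = ereal (- nf)"
    "(\<integral>\<^sup>+z. ennreal (exp (lam f (norm (fst z))) * (f z - chi k (f z))) \<partial>lebesgue) = ennreal nf"
    using D_good[OF gf b M s k] by blast
  obtain n1 where n1: "0 \<le> n1" "D k f1 = ereal (- n1)"
    "(\<integral>\<^sup>+z. ennreal (exp (lam f1 (norm (fst z))) * (f1 z - chi k (f1 z))) \<partial>lebesgue) = ennreal n1"
    using D_good[OF gf1 b M s k] by blast
  obtain ng where ng: "0 \<le> ng" "D k g = ereal (- ng)"
    "(\<integral>\<^sup>+z. ennreal (exp (lam g (norm (fst z))) * (g z - chi k (g z))) \<partial>lebesgue) = ennreal ng"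
    using D_good[OF gg b M s k] by blast
  have Egm[measurable]: "(\<lambda>z::phase. exp (lam g (norm (fst z)))) \<in> borel_measurable lebesgue"
    by (rule E_meas[where M=M]) (use gg in \<open>simp add: good_def\<close>)
  have Efm[measurable]: "(\<lambda>z::phase. exp (lam f (norm (fst z)))) \<in> borel_measurable lebesgue"
    by (rule E_meas[where M=M]) (use gf in \<open>simp add: good_def\<close>)
  have Ef1m[measurable]: "(\<lambda>z::phase. exp (lam f1 (norm (fst z)))) \<in> borel_measurable lebesgue"
    by (rule E_meas[where M=M]) (use gf1 in \<open>simp add: good_def\<close>)
  have chi_f1: "0 \<le> f1 z - chi k (f1 z)" for z
    using chi_props(2)[OF k f10[rule_format] f11[rule_format], of z] by simp
  have step7: "a^3 * n1 \<le> ng"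
  proof -
    have "ennreal (a^3 * n1) = ennreal (a^3) * ennreal n1"
      by (rule ennreal_mult) (use a0 n1 in auto)
    also have "\<dots> = ennreal (a^3) * (\<integral>\<^sup>+z. ennreal (exp (lam f1 (norm (fst z))) * (f1 z - chi k (f1 z))) \<partial>lebesgue)"
      using n1(3) by simp
    also have "\<dots> \<le> ennreal (a^3) * (\<integral>\<^sup>+z. ennreal (exp (lam g (norm (fst (sc a z)))) * (g (sc a z) - chi k (g (sc a z)))) \<partial>lebesgue)"
    proof (intro mult_left_mono nn_integral_mono ennreal_leI)
      fix z :: phase
      show "exp (lam f1 (norm (fst z))) * (f1 z - chi k (f1 z)) \<le> exp (lam g (norm (fst (sc a z)))) * (g (sc a z) - chi k (g (sc a z)))"
        unfolding g_sc sc_norm using Eg[of "norm (fst z)"] chi_f1[of z]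
        by (intro mult_right_mono) auto
    qed simp
    also have "\<dots> = (\<integral>\<^sup>+z. ennreal (exp (lam g (norm (fst z))) * (g z - chi k (g z))) \<partial>lebesgue)"
      by (rule nn_scale[OF a0, symmetric]) measurable
    also have "\<dots> = ennreal ng" by (rule ng(3))
    finally show ?thesis using ng(1) by simp
  qed
  have step8: "nf \<le> n1 + (1 + \<eta>) * DM"
  proof -
    have pw: "ennreal (exp (lam f (norm (fst z))) * (f z - chi k (f z)))
      \<le> ennreal (exp (lam f1 (norm (fst z))) * (f1 z - chi k (f1 z)))
         + ennreal (1 + \<eta>) * (indicator {z. R \<le> norm (fst z)} z * ennreal (sqrt (1 + (norm (snd z))\<^sup>2) * f z))"
      for z :: phase
    proof (cases "norm (fst z) \<le> R")
      case True
      then show ?thesis using lamff1[OF True] by (simp add: f1_def)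
    next
      case False
      have cf: "0 \<le> chi k (f z)" "chi k (f z) \<le> f z"
        using chi_props[OF k f0[rule_format] f1le[rule_format], of z] by auto
      have w1: "f z \<le> sqrt (1 + (norm (snd z))\<^sup>2) * f z"
        using mult_right_mono[of 1 "sqrt (1 + (norm (snd z))\<^sup>2)" "f z"] f0 by simp
      have "exp (lam f (norm (fst z))) * (f z - chi k (f z)) \<le> (1 + \<eta>) * (sqrt (1 + (norm (snd z))\<^sup>2) * f z)"
        using Ef[of "norm (fst z)"] False cf w1 assms(10)
        by (intro mult_mono) auto
      then have "ennreal (exp (lam f (norm (fst z))) * (f z - chi k (f z))) \<le> ennreal ((1 + \<eta>) * (sqrt (1 + (norm (snd z))\<^sup>2) * f z))"
        by (rule ennreal_leI)
      also have "\<dots> = ennreal (1 + \<eta>) * ennreal (sqrt (1 + (norm (snd z))\<^sup>2) * f z)"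
        by (rule ennreal_mult) (use assms(10) f0[rule_format, of z] in auto)
      finally show ?thesis using False by (simp add: f1_def)
    qed
    have "ennreal nf \<le> (\<integral>\<^sup>+z. ennreal (exp (lam f1 (norm (fst z))) * (f1 z - chi k (f1 z)))
         + ennreal (1 + \<eta>) * (indicator {z. R \<le> norm (fst z)} z * ennreal (sqrt (1 + (norm (snd z))\<^sup>2) * f z)) \<partial>lebesgue)"
      unfolding nf(3)[symmetric] by (rule nn_integral_mono) (rule pw)
    also have "\<dots> = ennreal n1 + ennreal (1 + \<eta>) * mass_on f {z. R \<le> norm (fst z)}"
      unfolding mass_on_def n1(3)[symmetric]
      by (subst nn_integral_add) (auto simp: nn_integral_cmult)
    also have "\<dots> = ennreal (n1 + (1 + \<eta>) * DM)"
      unfolding mge using n1(1) assms(10) DM0 by (simp add: ennreal_mult ennreal_plus)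
    finally show ?thesis using n1(1) assms(10) DM0 by (subst (asm) ennreal_le_iff) auto
  qed
  have step9: "nf \<ge> ng - \<epsilon>"
  proof -
    have "(INF g\<in>admissible M \<sigma>0. D k g) \<le> D k g" by (rule INF_lower[OF gadm])
    then have "D k f \<le> D k g + ereal \<epsilon>" using assms(14) by (metis add_right_mono order_trans)
    then show ?thesis using nf(2) ng(2) by simp
  qed
  have fin: "(a^3 - 1) * n1 \<le> (1 + \<eta>) * DM + \<epsilon>" using step7 step8 step9 by (simp add: algebra_simps)
  have a31: "a^3 - 1 = DM / (M - DM)" using a3 m10 by (simp add: m1_def field_simps)
  have main: "ereal (DM / (M - DM)) * \<bar>D k f1\<bar> \<le> ereal ((1 + \<eta>) * DM + \<epsilon>)"
    using fin n1(1,2) by (simp add: a31[symmetric])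
  show ?thesis using main by (simp add: Let_def DM_def f1_def)
qed
end
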